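(* Let $\mathbf L=(L,\vee,\wedge,0,1)$ be a complemented modular lattice with $0\ne1$. Then the following are equivalent: (i) $x^{++}=\{x\}$ for all $x\in L$; (ii) for every $x\in L$ and every $y\in x^{++}$ there exists some $z\in y^+$ such that either $(x\vee y)\wedge z=0$ or $(x\wedge y)\vee z=1$.
   Context: For $a\in L$, $a^+:=\{x\in L\mid a\vee x=1,\ a\wedge x=0\}$ (the set of all complements of $a$). For $A\subseteq L$, $A^+:=\{x\in L\mid a\vee x=1\text{ and }a\wedge x=0\text{ for all }a\in A\}$, and $a^{++}:=(a^+)^+$. *)

theory Defs
  imports Main
begin

definition modular_lattice :: "'a::bounded_lattice itself \<Rightarrow> bool" where
  "modular_lattice _ \<longleftrightarrow> (\<forall>x y z :: 'a. x \<le> z \<longrightarrow> sup x (inf y z) = inf (sup x y) z)"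

definition complemented_lattice :: "'a::bounded_lattice itself \<Rightarrow> bool" where
  "complemented_lattice _ \<longleftrightarrow> (\<forall>x :: 'a. \<exists>y. sup x y = top \<and> inf x y = bot)"

definition cmpl :: "'a::bounded_lattice \<Rightarrow> 'a set" where
  "cmpl a = {x. sup a x = top \<and> inf a x = bot}"

definition cmplS :: "'a::bounded_lattice set \<Rightarrow> 'a set" where
  "cmplS A = {x. \<forall>a\<in>A. sup a x = top \<and> inf a x = bot}"

end

theory Submission
  imports Defs
begin

lemma common_compl:
  fixes a b c :: "'a::bounded_lattice"
  assumes "modular_lattice TYPE('a)" "a \<le> b" "sup a c = top" "inf b c = bot"
  shows "a = b"
proof -
  have "sup a (inf c b) = inf (sup a c) b"
    using assms(1,2) unfolding modular_lattice_def by blast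
  then show ?thesis using assms(3,4) by (simp add: inf_commute)
qed

theorem theorem1:
  assumes "modular_lattice TYPE('a::bounded_lattice)"
    and "complemented_lattice TYPE('a)"
    and "(bot::'a) \<noteq> top"
  shows "(\<forall>x::'a. cmplS (cmpl x) = {x}) \<longleftrightarrow>
         (\<forall>x::'a. \<forall>y\<in>cmplS (cmpl x). \<exists>z\<in>cmpl y.
             inf (sup x y) z = bot \<or> sup (inf x y) z = top)"
proof
  assume H: "\<forall>x::'a. cmplS (cmpl x) = {x}"
  show "\<forall>x::'a. \<forall>y\<in>cmplS (cmpl x). \<exists>z\<in>cmpl y.
             inf (sup x y) z = bot \<or> sup (inf x y) z = top"
  proof (intro allI ballI)
    fix x y :: 'a
    assume "y \<in> cmplS (cmpl x)"
    then have "y = x" using H by auto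
    obtain z where "sup x z = top" "inf x z = bot"
      using assms(2) unfolding complemented_lattice_def by blast
    then show "\<exists>z\<in>cmpl y. inf (sup x y) z = bot \<or> sup (inf x y) z = top"
      using \<open>y = x\<close> by (auto simp: cmpl_def)
  qed
next
  assume H: "\<forall>x::'a. \<forall>y\<in>cmplS (cmpl x). \<exists>z\<in>cmpl y.
             inf (sup x y) z = bot \<or> sup (inf x y) z = top"
  show "\<forall>x::'a. cmplS (cmpl x) = {x}"
  proof
    fix x :: 'a
    obtain c where c: "sup x c = top" "inf x c = bot"
      using assms(2) unfolding complemented_lattice_def by blast
    have xin: "x \<in> cmplS (cmpl x)"
      by (auto simp: cmplS_def cmpl_def sup_commute inf_commute)
    have "y = x" if y: "y \<in> cmplS (cmpl x)" for y
    proof -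
      have "c \<in> cmpl x" using c by (simp add: cmpl_def)
      then have yc: "sup c y = top" "inf c y = bot" using y by (auto simp: cmplS_def)
      obtain z where z: "sup y z = top" "inf y z = bot"
        and d: "inf (sup x y) z = bot \<or> sup (inf x y) z = top"
        using H y by (auto simp: cmpl_def)
      show ?thesis
      proof (cases "inf (sup x y) z = bot")
        case True
        have "sup y z \<le> sup (sup x y) z" by (simp add: le_supI1)
        then have "sup (sup x y) z = top" using z by (simp add: top_unique)
        then have "y = sup x y"
          using common_compl[OF assms(1), of y "sup x y" z] True z by simp
        then have "x \<le> y" by (metis sup.cobounded1)
        moreover have "sup x c = top" "inf y c = bot" using c yc by (auto simp: inf_commute)
        ultimately show ?thesis using common_compl[OF assms(1), of x y c] by simp
      next
        case False
        then have T: "sup (inf x y) z = top" using d by simp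
        have "inf (inf x y) z \<le> inf y z" by (simp add: le_infI1)
        then have "inf y z = bot" using z by simp
        have "inf x y = y"
          using common_compl[OF assms(1), of "inf x y" y z] T z by simp
        then have "y \<le> x" by (metis inf.cobounded1)
        moreover have "sup y c = top" "inf x c = bot" using c yc by (auto simp: sup_commute)
        ultimately show ?thesis using common_compl[OF assms(1), of y x c] by simp
      qed
    qed
    then show "cmplS (cmpl x) = {x}" using xin by blast
  qed
qed

end
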